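(* Let $F=C^\infty(]0,1[,\mathbb{R})$ with the Fr\'echet topology given by the seminorms $\|f\|_{n,k}=\sup_{\frac{1}{n+1}\le x\le\frac{n}{n+1}}|f^{(k)}(x)|$, $(n,k)\in\mathbb{N}^*\times\mathbb{N}$. Let $\mathcal{A}=\{f\in C^\infty(]0,1[,]0,1[)\mid \lim_{x\to1}f(x)=1,\ \lim_{x\to0}f(x)=0\}$ and $\mathcal{D}=\{f\in\mathcal{A}\mid \inf_{x\in]0,1[}f'(x)>0 \text{ and } \sup_{x\in]0,1[}f'(x)>0\}\subset F$. Let $P\in\mathbb{R}[x]$ with $P(0)=P(1)=0$, $0<P(x)<\min(x,1-x)$ on $]0,1[$ and $\sup_{]0,1[}|P'|<1$, let $\varphi(t,x)=\frac{P(x)t}{(1-P(x))t+P(x)}$ and $c_t(x)=x+\varphi(t,x)$ for $t\ge0$, $c_t(x)=x-\varphi(-t,x)$ for $t<0$. Then the path $t\mapsto c_t$ is of class $C^1$ from $]-1,1[$ to $\mathcal{D}$, and $\partial_t c_t|_{t=0}=\mathbf{1}$ is the constant function equal to $1$. *)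

theory Defs
  imports "HOL-Analysis.Analysis" "HOL-Computational_Algebra.Polynomial"
begin

definition smooth_on :: "real set \<Rightarrow> (real \<Rightarrow> real) \<Rightarrow> bool" where
  "smooth_on S f \<longleftrightarrow> (\<forall>k. \<forall>x\<in>S. ((deriv ^^ k) f) field_differentiable (at x))"

definition seminorm_nk :: "nat \<Rightarrow> nat \<Rightarrow> (real \<Rightarrow> real) \<Rightarrow> real" where
  "seminorm_nk n k f = Sup ((\<lambda>x. \<bar>(deriv ^^ k) f x\<bar>) ` {1 / (real n + 1) .. real n / (real n + 1)})"

definition F_tendsto :: "('a \<Rightarrow> real \<Rightarrow> real) \<Rightarrow> (real \<Rightarrow> real) \<Rightarrow> 'a filter \<Rightarrow> bool" where
  "F_tendsto g l F \<longleftrightarrow>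
     (\<forall>n k. n \<ge> 1 \<longrightarrow> ((\<lambda>s. seminorm_nk n k (\<lambda>x. g s x - l x)) \<longlongrightarrow> 0) F)"

definition F_has_derivative :: "(real \<Rightarrow> real \<Rightarrow> real) \<Rightarrow> (real \<Rightarrow> real) \<Rightarrow> real \<Rightarrow> bool" where
  "F_has_derivative c D t \<longleftrightarrow>
     smooth_on {0<..<1} D \<and> F_tendsto (\<lambda>h x. (c (t + h) x - c t x) / h) D (at 0)"

definition F_C1_on :: "real set \<Rightarrow> (real \<Rightarrow> real \<Rightarrow> real) \<Rightarrow> bool" where
  "F_C1_on T c \<longleftrightarrow>
     (\<forall>t\<in>T. smooth_on {0<..<1} (c t)) \<and>
     (\<exists>c'. (\<forall>t\<in>T. F_has_derivative c (c' t) t) \<and> (\<forall>t\<in>T. F_tendsto c' (c' t) (at t within T)))"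

definition setA :: "(real \<Rightarrow> real) set" where
  "setA = {f. smooth_on {0<..<1} f \<and> (\<forall>x\<in>{0<..<1}. f x \<in> {0<..<1}) \<and>
              (f \<longlongrightarrow> 1) (at_left 1) \<and> (f \<longlongrightarrow> 0) (at_right 0)}"

definition setD :: "(real \<Rightarrow> real) set" where
  "setD = {f \<in> setA. Inf ((\<lambda>x. ereal (deriv f x)) ` {0<..<1}) > 0 \<and>
                     Sup ((\<lambda>x. ereal (deriv f x)) ` {0<..<1}) > 0}"

definition phiP :: "real poly \<Rightarrow> real \<Rightarrow> real \<Rightarrow> real" where
  "phiP P t x = poly P x * t / ((1 - poly P x) * t + poly P x)"

definition cP :: "real poly \<Rightarrow> real \<Rightarrow> real \<Rightarrow> real" where
  "cP P t x = (if t \<ge> 0 then x + phiP P t x else x - phiP P (- t) x)"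

end

theory Submission
  imports Defs
begin

abbreviation "XI \<equiv> {0<..<1::real}"

coinductive good :: "(real \<Rightarrow> real \<Rightarrow> real) \<Rightarrow> bool" where
  "continuous_on (UNIV \<times> XI) (\<lambda>z. g (fst z) (snd z)) \<Longrightarrow>
   (\<forall>p. \<forall>x\<in>XI. (g p has_real_derivative g' p x) (at x)) \<Longrightarrow> good g' \<Longrightarrow> good g"

thm good.coinduct good.cases
lemma "True" by simp

definition Dg :: "(real \<Rightarrow> real \<Rightarrow> real) \<Rightarrow> (real \<Rightarrow> real \<Rightarrow> real)" where
  "Dg g = (SOME g'. good g' \<and> (\<forall>p. \<forall>x\<in>XI. (g p has_real_derivative g' p x) (at x)))"

lemma good_Dg:
  assumes "good g"
  shows "good (Dg g)" "\<And>p x. x \<in> XI \<Longrightarrow> (g p has_real_derivative Dg g p x) (at x)"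
    "continuous_on (UNIV \<times> XI) (\<lambda>z. g (fst z) (snd z))"
proof -
  from assms obtain g' where "continuous_on (UNIV \<times> XI) (\<lambda>z. g (fst z) (snd z))"
    "\<forall>p. \<forall>x\<in>XI. (g p has_real_derivative g' p x) (at x)" "good g'"
    by (cases rule: good.cases) auto
  then have ex: "\<exists>g'. good g' \<and> (\<forall>p. \<forall>x\<in>XI. (g p has_real_derivative g' p x) (at x))" by blast
  from someI_ex[OF ex] show "good (Dg g)" "\<And>p x. x \<in> XI \<Longrightarrow> (g p has_real_derivative Dg g p x) (at x)"
    unfolding Dg_def by auto
  show "continuous_on (UNIV \<times> XI) (\<lambda>z. g (fst z) (snd z))" by fact
qed

lemma deriv_funpow_cong:
  assumes "open S" "\<And>x. x \<in> S \<Longrightarrow> f x = g x" "x \<in> S"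
  shows "(deriv ^^ k) f x = (deriv ^^ k) g x"
  using assms(3)
proof (induction k arbitrary: x)
  case 0
  then show ?case using assms(2) by simp
next
  case (Suc k)
  have "eventually (\<lambda>y. y \<in> S) (nhds x)" using assms(1) Suc.prems eventually_nhds_in_open by blast
  then have "eventually (\<lambda>y. (deriv ^^ k) f y = (deriv ^^ k) g y) (nhds x)"
    by (rule eventually_mono) (use Suc.IH in auto)
  then show ?case by (simp add: deriv_cong_ev)
qed

lemma good_funpow:
  assumes "good g"
  shows "good ((Dg ^^ k) g) \<and> (\<forall>p. \<forall>x\<in>XI. (deriv ^^ k) (g p) x = (Dg ^^ k) g p x)"
proof (induction k)
  case 0
  then show ?case using assms by (simp only: funpow.simps id_apply) blast
next
  case (Suc k)
  then have gk: "good ((Dg ^^ k) g)" and eq: "\<And>p x. x\<in>XI \<Longrightarrow> (deriv ^^ k) (g p) x = (Dg ^^ k) g p x" by auto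
  have "(deriv ^^ Suc k) (g p) x = (Dg ^^ Suc k) g p x" if "x \<in> XI" for p x
  proof -
    have "eventually (\<lambda>y. y \<in> XI) (nhds x)" using that by (intro eventually_nhds_in_open) auto
    then have "eventually (\<lambda>y. (deriv ^^ k) (g p) y = (Dg ^^ k) g p y) (nhds x)"
      by (rule eventually_mono) (use eq in auto)
    then have "deriv ((deriv ^^ k) (g p)) x = deriv ((Dg ^^ k) g p) x" by (simp add: deriv_cong_ev)
    also have "\<dots> = Dg ((Dg ^^ k) g) p x"
      by (rule DERIV_imp_deriv) (rule good_Dg(2)[OF gk that])
    finally show ?thesis by (simp only: funpow.simps o_def)
  qed
  moreover have "good ((Dg ^^ Suc k) g)" using good_Dg(1)[OF gk] by simp
  ultimately show ?case by blast
qed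

lemma good_smooth:
  assumes "good g" "\<And>x. x \<in> XI \<Longrightarrow> f x = g p x"
  shows "smooth_on XI f"
  unfolding smooth_on_def
proof (intro allI ballI)
  fix k x assume x: "x \<in> XI"
  have gk: "good ((Dg ^^ k) g)" and eq: "\<And>y. y\<in>XI \<Longrightarrow> (deriv ^^ k) (g p) y = (Dg ^^ k) g p y"
    using good_funpow[OF assms(1), of k] by auto
  have "\<And>y. y \<in> XI \<Longrightarrow> (deriv ^^ k) f y = (Dg ^^ k) g p y"
    using deriv_funpow_cong[of XI f "g p"] assms(2) eq by auto
  have "((Dg ^^ k) g p has_real_derivative Dg ((Dg ^^ k) g) p x) (at x)" by (rule good_Dg(2)[OF gk x])
  then have "((deriv ^^ k) f has_real_derivative Dg ((Dg ^^ k) g) p x) (at x)"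
    by (rule has_field_derivative_transform_within_open[where S=XI]) (use x \<open>\<And>y. y \<in> XI \<Longrightarrow> (deriv ^^ k) f y = _\<close> in auto)
  then show "(deriv ^^ k) f field_differentiable at x" unfolding field_differentiable_def by blast
qed

lemma good_coI:
  assumes "X g"
    "\<And>g. X g \<Longrightarrow> continuous_on (UNIV \<times> XI) (\<lambda>z. g (fst z) (snd z)) \<and>
        (\<exists>g'. (\<forall>p. \<forall>x\<in>XI. (g p has_real_derivative g' p x) (at x)) \<and> (X g' \<or> good g'))"
  shows "good g"
  apply (rule good.coinduct[of X, OF assms(1)])
  using assms(2) by blast

lemma good_poly: "good (\<lambda>p x. poly (Q::real poly) x)"
proof (rule good_coI[where X="\<lambda>g. \<exists>Q. g = (\<lambda>p x. poly Q x)"])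
  fix g :: "real \<Rightarrow> real \<Rightarrow> real" assume "\<exists>Q::real poly. g = (\<lambda>p x. poly Q x)"
  then obtain Q where g: "g = (\<lambda>p x. poly Q x)" by blast
  have c: "continuous_on (UNIV \<times> XI) (\<lambda>z. g (fst z) (snd z))" unfolding g by (intro continuous_intros)
  have d: "\<forall>p. \<forall>x\<in>XI. (g p has_real_derivative poly (pderiv Q) x) (at x)" unfolding g by (auto intro: poly_DERIV)
  show "continuous_on (UNIV \<times> XI) (\<lambda>z. g (fst z) (snd z)) \<and>
        (\<exists>g'. (\<forall>p. \<forall>x\<in>XI. (g p has_real_derivative g' p x) (at x)) \<and> ((\<exists>Q. g' = (\<lambda>p x. poly Q x)) \<or> good g'))"
    apply (rule conjI[OF c], rule exI[of _ "\<lambda>p x. poly (pderiv Q) x"], rule conjI[OF d])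
    by (rule disjI1, rule exI[of _ "pderiv Q"], rule refl)
qed auto

lemma good_param:
  assumes "continuous_on UNIV a"
  shows "good (\<lambda>p x. a p)"
proof (rule good_coI[where X="\<lambda>g. \<exists>a. continuous_on UNIV a \<and> g = (\<lambda>p x. a p)"])
  fix g :: "real \<Rightarrow> real \<Rightarrow> real" assume "\<exists>a. continuous_on UNIV a \<and> g = (\<lambda>p x. a p)"
  then obtain a where a: "continuous_on UNIV a" and g: "g = (\<lambda>p x. a p)" by blast
  have c: "continuous_on (UNIV \<times> XI) (\<lambda>z. g (fst z) (snd z))" unfolding g
    by (intro continuous_on_compose2[OF a]) (auto intro!: continuous_intros)
  have d: "\<forall>p. \<forall>x\<in>XI. (g p has_real_derivative 0) (at x)" unfolding g by auto
  show "continuous_on (UNIV \<times> XI) (\<lambda>z. g (fst z) (snd z)) \<and>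
        (\<exists>g'. (\<forall>p. \<forall>x\<in>XI. (g p has_real_derivative g' p x) (at x)) \<and> ((\<exists>a. continuous_on UNIV a \<and> g' = (\<lambda>p x. a p)) \<or> good g'))"
    apply (rule conjI[OF c], rule exI[of _ "\<lambda>p x. 0"], rule conjI) using d apply simp
    by (rule disjI1, rule exI[of _ "\<lambda>_. 0"]) simp
qed (use assms in blast)

lemma good_add:
  assumes "good f" "good g"
  shows "good (\<lambda>p x. f p x + g p x)"
proof (rule good_coI[where X="\<lambda>h. \<exists>f g. good f \<and> good g \<and> h = (\<lambda>p x. f p x + g p x)"])
  fix h :: "real \<Rightarrow> real \<Rightarrow> real" assume "\<exists>f g. good f \<and> good g \<and> h = (\<lambda>p x. f p x + g p x)"
  then obtain f g where f: "good f" and g: "good g" and h: "h = (\<lambda>p x. f p x + g p x)" by blast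
  have c: "continuous_on (UNIV \<times> XI) (\<lambda>z. h (fst z) (snd z))" unfolding h
    using good_Dg(3)[OF f] good_Dg(3)[OF g] by (intro continuous_intros)
  have d: "\<forall>p. \<forall>x\<in>XI. (h p has_real_derivative (\<lambda>p x. Dg f p x + Dg g p x) p x) (at x)" unfolding h
    using good_Dg(2)[OF f] good_Dg(2)[OF g] by (auto intro!: derivative_intros)
  show "continuous_on (UNIV \<times> XI) (\<lambda>z. h (fst z) (snd z)) \<and>
        (\<exists>g'. (\<forall>p. \<forall>x\<in>XI. (h p has_real_derivative g' p x) (at x)) \<and> ((\<exists>f g. good f \<and> good g \<and> g' = (\<lambda>p x. f p x + g p x)) \<or> good g'))"
    apply (rule conjI[OF c], rule exI[of _ "\<lambda>p x. Dg f p x + Dg g p x"], rule conjI[OF d])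
    apply (rule disjI1, rule exI[of _ "Dg f"], rule exI[of _ "Dg g"])
    using good_Dg(1)[OF f] good_Dg(1)[OF g] by simp
qed (use assms in blast)

definition psum :: "((real \<Rightarrow> real \<Rightarrow> real) \<times> (real \<Rightarrow> real \<Rightarrow> real)) list \<Rightarrow> real \<Rightarrow> real \<Rightarrow> real" where
  "psum L p x = sum_list (map (\<lambda>(f,g). f p x * g p x) L)"

definition dL :: "((real \<Rightarrow> real \<Rightarrow> real) \<times> (real \<Rightarrow> real \<Rightarrow> real)) list \<Rightarrow> ((real \<Rightarrow> real \<Rightarrow> real) \<times> (real \<Rightarrow> real \<Rightarrow> real)) list" where
  "dL L = map (\<lambda>(f,g). (Dg f, g)) L @ map (\<lambda>(f,g). (f, Dg g)) L"

lemma psum_cont: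
  assumes "\<forall>(f,g)\<in>set L. good f \<and> good g"
  shows "continuous_on (UNIV \<times> XI) (\<lambda>z. psum L (fst z) (snd z))"
  using assms
proof (induction L)
  case Nil
  then show ?case by (simp add: psum_def)
next
  case (Cons a L)
  obtain f g where a: "a = (f,g)" by fastforce
  have f: "good f" and g: "good g" using Cons.prems a by auto
  have "continuous_on (UNIV \<times> XI) (\<lambda>z. f (fst z) (snd z) * g (fst z) (snd z) + psum L (fst z) (snd z))"
    using good_Dg(3)[OF f] good_Dg(3)[OF g] Cons by (intro continuous_intros) auto
  then show ?case by (simp add: psum_def a)
qed

lemma psum_dL: "psum (dL L) p x = sum_list (map (\<lambda>(f,g). Dg f p x * g p x + f p x * Dg g p x) L)"
  by (induction L) (auto simp: psum_def dL_def)

lemma psum_deriv: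
  assumes "\<forall>(f,g)\<in>set L. good f \<and> good g" "x \<in> XI"
  shows "(psum L p has_real_derivative psum (dL L) p x) (at x)"
  unfolding psum_dL using assms(1)
proof (induction L)
  case Nil
  then show ?case by (simp add: psum_def)
next
  case (Cons a L)
  obtain f g where a: "a = (f,g)" by fastforce
  have f: "good f" and g: "good g" using Cons.prems a by auto
  have "((\<lambda>x. f p x * g p x + psum L p x) has_real_derivative
      (Dg f p x * g p x + f p x * Dg g p x) + sum_list (map (\<lambda>(f,g). Dg f p x * g p x + f p x * Dg g p x) L)) (at x)"
  proof (rule DERIV_add)
    show "((\<lambda>x. f p x * g p x) has_real_derivative Dg f p x * g p x + f p x * Dg g p x) (at x)"
      using DERIV_mult[OF good_Dg(2)[OF f assms(2)] good_Dg(2)[OF g assms(2)]] by (simp add: mult.commute)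
    show "(psum L p has_real_derivative (\<Sum>(f, g)\<leftarrow>L. Dg f p x * g p x + f p x * Dg g p x)) (at x)"
      using Cons by auto
  qed
  moreover have "psum (a # L) p = (\<lambda>x. f p x * g p x + psum L p x)" by (auto simp: psum_def a)
  ultimately show ?case by (simp add: a)
qed

lemma good_psum:
  assumes "\<forall>(f,g)\<in>set L. good f \<and> good g"
  shows "good (psum L)"
proof (rule good_coI[where X="\<lambda>h. \<exists>L. (\<forall>(f,g)\<in>set L. good f \<and> good g) \<and> h = psum L"])
  fix h :: "real \<Rightarrow> real \<Rightarrow> real" assume "\<exists>L. (\<forall>(f,g)\<in>set L. good f \<and> good g) \<and> h = psum L"
  then obtain L where L: "\<forall>(f,g)\<in>set L. good f \<and> good g" and h: "h = psum L" by blast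
  have L': "\<forall>(f,g)\<in>set (dL L). good f \<and> good g" using L by (auto simp: dL_def good_Dg(1))
  show "continuous_on (UNIV \<times> XI) (\<lambda>z. h (fst z) (snd z)) \<and>
        (\<exists>g'. (\<forall>p. \<forall>x\<in>XI. (h p has_real_derivative g' p x) (at x)) \<and> ((\<exists>L. (\<forall>(f,g)\<in>set L. good f \<and> good g) \<and> g' = psum L) \<or> good g'))"
    apply (rule conjI, unfold h, rule psum_cont[OF L], rule exI[of _ "psum (dL L)"], rule conjI)
    using psum_deriv[OF L] apply blast
    using L' by blast
qed (use assms in blast)

lemma good_mult:
  assumes "good f" "good g"
  shows "good (\<lambda>p x. f p x * g p x)"
proof -
  have "good (psum [(f,g)])" by (rule good_psum) (use assms in auto)
  moreover have "psum [(f,g)] = (\<lambda>p x. f p x * g p x)" by (rule ext)+ (simp add: psum_def)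
  ultimately show ?thesis by simp
qed

lemma quot_pow_deriv_eq:
  fixes a b c d :: real and m :: nat
  assumes "b \<noteq> 0"
  shows "(c * b ^ m - of_nat m * (d * b ^ (m - Suc 0)) * a) / (b ^ m) ^ Suc (Suc 0)
       = (c * b - real m * a * d) / b ^ (m + 1)"
proof (cases m)
  case 0
  then show ?thesis using assms by (simp add: field_simps)
next
  case (Suc n)
  then show ?thesis using assms by (simp add: field_simps power_add power_mult_distrib)
qed

lemma good_div_pow:
  assumes g: "good g" and nz: "\<forall>p. \<forall>x\<in>XI. g p x \<noteq> 0" and f: "good f"
  shows "good (\<lambda>p x. f p x / g p x ^ m)"
proof (rule good_coI[where X="\<lambda>h. \<exists>f m. good f \<and> h = (\<lambda>p x. f p x / g p x ^ m)"])
  fix h :: "real \<Rightarrow> real \<Rightarrow> real" assume "\<exists>f m. good f \<and> h = (\<lambda>p x. f p x / g p x ^ m)"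
  then obtain f m where f: "good f" and h: "h = (\<lambda>p x. f p x / g p x ^ m)" by blast
  have c: "continuous_on (UNIV \<times> XI) (\<lambda>z. h (fst z) (snd z))" unfolding h
    using good_Dg(3)[OF f] good_Dg(3)[OF g] nz by (intro continuous_intros) auto
  define N where "N = (\<lambda>p x. Dg f p x * g p x + (\<lambda>p x. - real m) p x * (f p x * Dg g p x))"
  have N: "good N" unfolding N_def
    by (intro good_add good_mult good_Dg(1) f g good_param) auto
  have d: "\<forall>p. \<forall>x\<in>XI. (h p has_real_derivative N p x / g p x ^ (m+1)) (at x)"
  proof (intro allI ballI)
    fix p x assume x: "x \<in> XI"
    have "((\<lambda>y. f p y / g p y ^ m) has_real_derivative
        (Dg f p x * g p x ^ m - of_nat m * (Dg g p x * g p x ^ (m - Suc 0)) * f p x) / (g p x ^ m) ^ Suc (Suc 0)) (at x)"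
      by (rule DERIV_quotient[OF good_Dg(2)[OF f x] DERIV_power[OF good_Dg(2)[OF g x]]]) (use nz x in simp)
    then show "(h p has_real_derivative N p x / g p x ^ (m+1)) (at x)"
      unfolding h N_def using quot_pow_deriv_eq[of "g p x" "Dg f p x" m "Dg g p x" "f p x"] nz x
      by (simp add: algebra_simps)
  qed
  show "continuous_on (UNIV \<times> XI) (\<lambda>z. h (fst z) (snd z)) \<and>
        (\<exists>g'. (\<forall>p. \<forall>x\<in>XI. (h p has_real_derivative g' p x) (at x)) \<and> ((\<exists>f m. good f \<and> g' = (\<lambda>p x. f p x / g p x ^ m)) \<or> good g'))"
    apply (rule conjI[OF c], rule exI[of _ "\<lambda>p x. N p x / g p x ^ (m+1)"], rule conjI[OF d])
    apply (rule disjI1, rule exI[of _ N], rule exI[of _ "m+1"])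
    using N by simp
qed (use f in blast)

lemma good_div:
  assumes "good f" "good g" "\<forall>p. \<forall>x\<in>XI. g p x \<noteq> 0"
  shows "good (\<lambda>p x. f p x / g p x)"
  using good_div_pow[OF assms(2,3,1), of 1] by simp

lemma good_minus:
  assumes "good f" "good g"
  shows "good (\<lambda>p x. f p x - g p x)"
proof -
  have "good (\<lambda>p x. f p x + (\<lambda>p x. -1) p x * g p x)"
    by (intro good_add good_mult good_param assms) auto
  then show ?thesis by simp
qed

lemma deriv_funpow_zero: "(deriv ^^ k) (\<lambda>_. (0::real)) = (\<lambda>_. 0)"
proof (induction k)
  case 0 then show ?case by simp
next
  case (Suc k)
  have "deriv (\<lambda>_::real. 0::real) = (\<lambda>_. 0)" by (rule ext) (rule DERIV_imp_deriv, rule DERIV_const)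
  then show ?case using Suc by simp
qed

lemma good_zero_derivs:
  assumes "good H" "\<forall>x\<in>XI. H p0 x = 0" "x \<in> XI"
  shows "(Dg ^^ k) H p0 x = 0"
proof -
  have "(Dg ^^ k) H p0 x = (deriv ^^ k) (H p0) x" using good_funpow[OF assms(1), of k] assms(3) by auto
  also have "\<dots> = (deriv ^^ k) (\<lambda>_. 0) x"
    by (rule deriv_funpow_cong[of XI]) (use assms in auto)
  finally show ?thesis by (simp add: deriv_funpow_zero)
qed

definition KK :: "nat \<Rightarrow> real set" where "KK n = {1 / (real n + 1) .. real n / (real n + 1)}"

lemma KK_sub: "n \<ge> 1 \<Longrightarrow> KK n \<subseteq> XI"
proof
  fix x assume "x \<in> KK n"
  then have a: "1/(real n+1) \<le> x" "x \<le> real n/(real n+1)" unfolding KK_def by auto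
  have b: "0 < 1/(real n+1)" by simp
  have c: "real n/(real n+1) < 1" by simp
  have "0 < x" using a(1) b by linarith
  moreover have "x < 1" using a(2) c by linarith
  ultimately show "x \<in> XI" by simp
qed

lemma KK_ne: "n \<ge> 1 \<Longrightarrow> KK n \<noteq> {}"
  by (auto simp: KK_def divide_right_mono)

lemma sup_tendsto:
  fixes G :: "real \<Rightarrow> real \<Rightarrow> real"
  assumes cont: "continuous_on (UNIV \<times> XI) (\<lambda>z. G (fst z) (snd z))"
    and z: "\<forall>x\<in>XI. G p0 x = 0" and n: "n \<ge> 1"
  shows "((\<lambda>p. Sup ((\<lambda>x. \<bar>G p x\<bar>) ` KK n)) \<longlongrightarrow> 0) (nhds p0)"
proof -
  have cpt: "compact (cball p0 1 \<times> KK n)" by (auto simp: KK_def intro!: compact_Times)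
  have "continuous_on (cball p0 1 \<times> KK n) (\<lambda>z. G (fst z) (snd z))"
    by (rule continuous_on_subset[OF cont]) (use KK_sub[OF n] in auto)
  then have uc: "uniformly_continuous_on (cball p0 1 \<times> KK n) (\<lambda>z. G (fst z) (snd z))"
    using cpt compact_uniformly_continuous by blast
  show ?thesis unfolding tendsto_iff eventually_nhds_metric
  proof (intro allI impI)
    fix e :: real assume e: "e > 0"
    then have "e/2 > 0" by simp
    then obtain d where d: "d > 0" and hd: "\<And>u v. u \<in> cball p0 1 \<times> KK n \<Longrightarrow> v \<in> cball p0 1 \<times> KK n \<Longrightarrow>
        dist v u < d \<Longrightarrow> dist (G (fst v) (snd v)) (G (fst u) (snd u)) < e/2"
      using uc unfolding uniformly_continuous_on_def by metis
    show "\<exists>d>0. \<forall>p. dist p p0 < d \<longrightarrow> dist (Sup ((\<lambda>x. \<bar>G p x\<bar>) ` KK n)) 0 < e"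
    proof (intro exI[of _ "min d 1"] conjI allI impI)
      show "min d 1 > 0" using d by simp
      fix p assume p: "dist p p0 < min d 1"
      have bound: "\<bar>G p x\<bar> \<le> e/2" if x: "x \<in> KK n" for x
      proof -
        have "dist (G (fst (p,x)) (snd (p,x))) (G (fst (p0,x)) (snd (p0,x))) < e/2"
          by (rule hd) (use p x in \<open>auto simp: dist_Pair_Pair dist_commute\<close>)
        moreover have "G p0 x = 0" using z KK_sub[OF n] x by auto
        ultimately show ?thesis by (simp add: dist_real_def)
      qed
      have le: "Sup ((\<lambda>x. \<bar>G p x\<bar>) ` KK n) \<le> e/2"
        by (rule cSUP_least) (use KK_ne[OF n] bound in auto)
      obtain x0 where x0: "x0 \<in> KK n" using KK_ne[OF n] by blast
      have "\<bar>G p x0\<bar> \<le> Sup ((\<lambda>x. \<bar>G p x\<bar>) ` KK n)"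
        by (rule cSUP_upper[OF x0]) (use bound in \<open>auto intro!: bdd_aboveI[where M="e/2"]\<close>)
      then have "0 \<le> Sup ((\<lambda>x. \<bar>G p x\<bar>) ` KK n)" by linarith
      then show "dist (Sup ((\<lambda>x. \<bar>G p x\<bar>) ` KK n)) 0 < e" using le e by (simp add: dist_real_def)
    qed
  qed
qed

lemma F_tendsto_goodI:
  assumes H: "good H" and z: "\<forall>x\<in>XI. H p0 x = 0" and F: "F \<le> nhds p0"
    and ev: "eventually (\<lambda>s. \<forall>x\<in>XI. q s x - l x = H s x) F"
  shows "F_tendsto q l F"
  unfolding F_tendsto_def
proof (intro allI impI)
  fix n k :: nat assume n: "n \<ge> 1"
  have gk: "good ((Dg ^^ k) H)" and eqk: "\<And>p x. x\<in>XI \<Longrightarrow> (deriv ^^ k) (H p) x = (Dg ^^ k) H p x"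
    using good_funpow[OF H, of k] by auto
  have z': "\<forall>x\<in>XI. (Dg ^^ k) H p0 x = 0" using good_zero_derivs[OF H z] by blast
  have lim: "((\<lambda>p. Sup ((\<lambda>x. \<bar>(Dg ^^ k) H p x\<bar>) ` KK n)) \<longlongrightarrow> 0) F"
    by (rule tendsto_mono[OF F sup_tendsto[OF good_Dg(3)[OF gk] z' n]])
  have evq: "eventually (\<lambda>s. Sup ((\<lambda>x. \<bar>(Dg ^^ k) H s x\<bar>) ` KK n) = seminorm_nk n k (\<lambda>x. q s x - l x)) F"
    using ev
  proof (rule eventually_mono)
    fix s assume s: "\<forall>x\<in>XI. q s x - l x = H s x"
    have "\<And>x. x \<in> KK n \<Longrightarrow> (deriv ^^ k) (\<lambda>x. q s x - l x) x = (Dg ^^ k) H s x"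
    proof -
      fix x assume "x \<in> KK n"
      then have x: "x \<in> XI" using KK_sub[OF n] by auto
      have "(deriv ^^ k) (\<lambda>x. q s x - l x) x = (deriv ^^ k) (H s) x"
        by (rule deriv_funpow_cong[of XI]) (use s x in auto)
      then show "(deriv ^^ k) (\<lambda>x. q s x - l x) x = (Dg ^^ k) H s x" using eqk x by simp
    qed
    then show "Sup ((\<lambda>x. \<bar>(Dg ^^ k) H s x\<bar>) ` KK n) = seminorm_nk n k (\<lambda>x. q s x - l x)"
      unfolding seminorm_nk_def KK_def by (intro arg_cong[where f=Sup] image_cong) auto
  qed
  show "((\<lambda>s. seminorm_nk n k (\<lambda>x. q s x - l x)) \<longlongrightarrow> 0) F"
    using tendsto_cong[OF evq] lim by simp
qed

definition Dn :: "real poly \<Rightarrow> real \<Rightarrow> real \<Rightarrow> real" where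
  "Dn P s x = poly P x + (1 - poly P x) * s"

definition Gf :: "real poly \<Rightarrow> real \<Rightarrow> real \<Rightarrow> real \<Rightarrow> real" where
  "Gf P a b x = poly P x * poly P x / (Dn P a x * Dn P b x)"

lemma Dn_pos:
  assumes pos: "\<forall>x\<in>XI. 0 < poly P x \<and> poly P x < min x (1 - x)" and x: "x \<in> XI" and s: "s \<ge> 0"
  shows "Dn P s x > 0"
proof -
  have h: "0 < poly P x \<and> poly P x < min x (1 - x)" using pos x by blast
  then have "0 < poly P x" "poly P x < 1" using x by auto
  then show ?thesis unfolding Dn_def using s by (simp add: add_pos_nonneg)
qed

lemma Dn_ge:
  assumes pos: "\<forall>x\<in>XI. 0 < poly P x \<and> poly P x < min x (1 - x)" and x: "x \<in> XI" and s: "s \<le> 1"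
  shows "Dn P s x \<ge> s"
proof -
  have "0 < poly P x" using pos x by auto
  then have "poly P x * (1 - s) \<ge> 0" using s by simp
  then show ?thesis unfolding Dn_def by (simp add: algebra_simps)
qed

lemma good_Dn:
  assumes "continuous_on UNIV a"
  shows "good (\<lambda>p x. Dn P (a p) x)"
proof -
  have "good (\<lambda>p x. poly P x + ((\<lambda>p x. 1) p x - poly P x) * (\<lambda>p x. a p) p x)"
    by (intro good_add good_mult good_minus good_poly good_param assms continuous_on_const)
  then show ?thesis by (simp add: Dn_def)
qed

lemma good_Gf:
  assumes pos: "\<forall>x\<in>XI. 0 < poly P x \<and> poly P x < min x (1 - x)"
    and a: "continuous_on UNIV a" "\<And>p. a p \<ge> 0" and b: "continuous_on UNIV b" "\<And>p. b p \<ge> 0"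
  shows "good (\<lambda>p x. Gf P (a p) (b p) x)"
proof -
  have "good (\<lambda>p x. (poly P x * poly P x) / (Dn P (a p) x * Dn P (b p) x))"
  proof (intro good_div good_mult good_poly good_Dn a b allI ballI)
    fix p x assume "x \<in> XI"
    then show "Dn P (a p) x * Dn P (b p) x \<noteq> 0" using Dn_pos[OF pos] a b by (metis mult_pos_pos less_irrefl)
  qed
  then show ?thesis by (simp add: Gf_def)
qed

lemma cP_eq: "cP P t x = x + t * poly P x / Dn P \<bar>t\<bar> x"
  unfolding cP_def phiP_def Dn_def by (auto simp: algebra_simps)

lemma dq_alg:
  fixes p t h A B x :: real
  assumes "h \<noteq> 0" "A \<noteq> 0" "B \<noteq> 0"
    and key: "(t+h)*A - t*B = h*p"
  shows "((x + (t+h)*p/B) - (x + t*p/A))/h = p*p/(A*B)"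
proof -
  have "(x + (t+h)*p/B) - (x + t*p/A) = p*((t+h)*A - t*B)/(A*B)"
    using assms(2,3) by (simp add: field_simps)
  also have "\<dots> = p*(h*p)/(A*B)" by (simp only: key)
  finally show ?thesis using assms(1-3) by (simp add: field_simps)
qed

lemma diffquot_eq:
  assumes pos: "\<forall>x\<in>XI. 0 < poly P x \<and> poly P x < min x (1 - x)" and x: "x \<in> XI"
    and h: "h \<noteq> 0" and sg: "(0 \<le> t \<and> 0 \<le> t + h) \<or> (t \<le> 0 \<and> t + h \<le> 0)"
  shows "(cP P (t + h) x - cP P t x) / h = Gf P \<bar>t\<bar> \<bar>t + h\<bar> x"
proof -
  have A: "Dn P \<bar>t\<bar> x > 0" "Dn P \<bar>t+h\<bar> x > 0" using Dn_pos[OF pos x] by auto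
  from sg show ?thesis
  proof
    assume s: "0 \<le> t \<and> 0 \<le> t + h"
    then have "\<bar>t\<bar> = t" "\<bar>t+h\<bar> = t+h" by auto
    then show ?thesis using A h unfolding cP_eq Gf_def Dn_def
      by (intro dq_alg) (auto simp: algebra_simps)
  next
    assume s: "t \<le> 0 \<and> t + h \<le> 0"
    then have "\<bar>t\<bar> = -t" "\<bar>t+h\<bar> = -(t+h)" by auto
    then show ?thesis using A h unfolding cP_eq Gf_def Dn_def
      by (intro dq_alg) (auto simp: algebra_simps)
  qed
qed

lemma Gf00:
  assumes pos: "\<forall>x\<in>XI. 0 < poly P x \<and> poly P x < min x (1 - x)" and x: "x \<in> XI"
  shows "Gf P 0 0 x = 1"
proof -
  have "0 < poly P x" using pos x by blast
  then show ?thesis by (simp add: Gf_def Dn_def)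
qed

lemma cP_fun: "cP P t = (\<lambda>x. x + t * poly P x / Dn P \<bar>t\<bar> x)"
  by (rule ext) (rule cP_eq)

lemma good_cP:
  assumes pos: "\<forall>x\<in>XI. 0 < poly P x \<and> poly P x < min x (1 - x)"
  shows "good (\<lambda>p x. x + t * poly P x / Dn P \<bar>t\<bar> x)"
proof -
  have "good (\<lambda>p x. poly [:0,1:] x + ((\<lambda>p x. t) p x * poly P x) / Dn P ((\<lambda>_. \<bar>t\<bar>) p) x)"
  proof (intro good_add good_div good_mult good_poly good_param good_Dn continuous_on_const allI ballI)
    fix p x assume "x \<in> XI" then show "Dn P \<bar>t\<bar> x \<noteq> 0" using Dn_pos[OF pos] by (metis abs_ge_zero less_irrefl)
  qed
  then show ?thesis by simp
qed

lemma smooth_cP: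
  assumes pos: "\<forall>x\<in>XI. 0 < poly P x \<and> poly P x < min x (1 - x)"
  shows "smooth_on XI (cP P t)"
  by (rule good_smooth[OF good_cP[OF pos]]) (simp add: cP_eq)

lemma deriv_cP:
  assumes pos: "\<forall>x\<in>XI. 0 < poly P x \<and> poly P x < min x (1 - x)" and x: "x \<in> XI"
  shows "deriv (cP P t) x = 1 + t * \<bar>t\<bar> * poly (pderiv P) x / (Dn P \<bar>t\<bar> x)^2"
proof -
  have D: "Dn P \<bar>t\<bar> x > 0" using Dn_pos[OF pos x] by simp
  have dD: "((\<lambda>x. Dn P \<bar>t\<bar> x) has_real_derivative poly (pderiv P) x - poly (pderiv P) x * \<bar>t\<bar>) (at x)"
    unfolding Dn_def by (auto intro!: derivative_eq_intros poly_DERIV simp: algebra_simps)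
  have "((\<lambda>x. x + t * (poly P x / Dn P \<bar>t\<bar> x)) has_real_derivative
      1 + t * ((poly (pderiv P) x * Dn P \<bar>t\<bar> x - (poly (pderiv P) x - poly (pderiv P) x * \<bar>t\<bar>) * poly P x) / (Dn P \<bar>t\<bar> x) ^ Suc (Suc 0))) (at x)"
    using D by (intro DERIV_add DERIV_ident DERIV_cmult DERIV_quotient poly_DERIV dD) auto
  moreover have "poly (pderiv P) x * Dn P \<bar>t\<bar> x - (poly (pderiv P) x - poly (pderiv P) x * \<bar>t\<bar>) * poly P x
      = \<bar>t\<bar> * poly (pderiv P) x" unfolding Dn_def by (simp add: algebra_simps)
  ultimately have "((\<lambda>x. x + t * (poly P x / Dn P \<bar>t\<bar> x)) has_real_derivative
      1 + t * \<bar>t\<bar> * poly (pderiv P) x / (Dn P \<bar>t\<bar> x)^2) (at x)"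
    by (simp add: power2_eq_square mult.assoc)
  then show ?thesis unfolding cP_fun times_divide_eq_right[symmetric] by (rule DERIV_imp_deriv)
qed

lemma deriv_cP_ge:
  assumes pos: "\<forall>x\<in>XI. 0 < poly P x \<and> poly P x < min x (1 - x)" and x: "x \<in> XI" and t: "\<bar>t\<bar> < 1"
  shows "deriv (cP P t) x \<ge> 1 - \<bar>poly (pderiv P) x\<bar>"
proof -
  define D where "D = Dn P \<bar>t\<bar> x"
  define q where "q = poly (pderiv P) x"
  have D: "D > 0" using Dn_pos[OF pos x] by (simp add: D_def)
  have sD: "\<bar>t\<bar> \<le> D" unfolding D_def by (rule Dn_ge[OF pos x]) (use t in simp)
  have "\<bar>t\<bar> * \<bar>t\<bar> \<le> D * D" using sD by (intro mult_mono) auto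
  then have "\<bar>t\<bar> * \<bar>t\<bar> * \<bar>q\<bar> \<le> D * D * \<bar>q\<bar>" by (intro mult_right_mono) auto
  then have "\<bar>t * \<bar>t\<bar> * q / D^2\<bar> \<le> \<bar>q\<bar>" using D
    by (simp add: abs_mult power2_eq_square divide_le_eq algebra_simps)
  then show ?thesis unfolding deriv_cP[OF pos x] D_def[symmetric] q_def[symmetric] by linarith
qed

lemma at_within_le_nhds': "at x within A \<le> nhds x"
  unfolding at_within_def by (rule inf_le1)

lemma cP_close:
  assumes pos: "\<forall>x\<in>XI. 0 < poly P x \<and> poly P x < min x (1 - x)" and x: "x \<in> XI" and t: "\<bar>t\<bar> < 1"
  shows "\<bar>cP P t x - x\<bar> \<le> poly P x"
proof -
  define D where "D = Dn P \<bar>t\<bar> x"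
  have D: "D > 0" using Dn_pos[OF pos x] by (simp add: D_def)
  have sD: "\<bar>t\<bar> \<le> D" unfolding D_def by (rule Dn_ge[OF pos x]) (use t in simp)
  have Pp: "poly P x > 0" using pos x by blast
  have "\<bar>t\<bar> * poly P x \<le> D * poly P x" using sD Pp by (intro mult_right_mono) auto
  then have "\<bar>t * poly P x / D\<bar> \<le> poly P x" using D Pp by (simp add: abs_mult divide_le_eq)
  then show ?thesis unfolding cP_eq D_def by simp
qed

lemma cP_range:
  assumes pos: "\<forall>x\<in>XI. 0 < poly P x \<and> poly P x < min x (1 - x)" and x: "x \<in> XI" and t: "\<bar>t\<bar> < 1"
  shows "cP P t x \<in> XI"
proof -
  have "poly P x < x" "poly P x < 1 - x" using pos x by auto
  then show ?thesis using cP_close[OF pos x t] by auto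
qed

lemma cP_in_A:
  assumes P0: "poly P 0 = 0" and P1: "poly P 1 = 0"
    and pos: "\<forall>x\<in>XI. 0 < poly P x \<and> poly P x < min x (1 - x)" and t: "\<bar>t\<bar> < 1"
  shows "cP P t \<in> setA"
proof -
  have cont: "isCont (poly P) a" for a by (rule poly_isCont)
  have "(poly P \<longlongrightarrow> poly P 1) (at_left 1)"
    by (rule tendsto_mono[OF at_le[OF subset_UNIV] isContD[OF cont]])
  then have l1: "(poly P \<longlongrightarrow> 0) (at_left 1)" using P1 by simp
  have "(poly P \<longlongrightarrow> poly P 0) (at_right 0)"
    by (rule tendsto_mono[OF at_le[OF subset_UNIV] isContD[OF cont]])
  then have l0: "(poly P \<longlongrightarrow> 0) (at_right 0)" using P0 by simp
  have e1: "eventually (\<lambda>x. x \<in> XI) (at_left (1::real))"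
    unfolding eventually_at_left[OF zero_less_one] by (rule exI[of _ 0]) auto
  have e0: "eventually (\<lambda>x. x \<in> XI) (at_right (0::real))"
    unfolding eventually_at_right[OF zero_less_one] by (rule exI[of _ 1]) auto
  have "((\<lambda>x. cP P t x - x) \<longlongrightarrow> 0) (at_left 1)"
    by (rule Lim_null_comparison[OF _ l1]) (use e1 cP_close[OF pos _ t] in \<open>auto elim!: eventually_mono\<close>)
  then have "((\<lambda>x. x + (cP P t x - x)) \<longlongrightarrow> 1 + 0) (at_left 1)"
    by (intro tendsto_add) (auto intro: tendsto_ident_at)
  then have A1: "(cP P t \<longlongrightarrow> 1) (at_left 1)" by simp
  have "((\<lambda>x. cP P t x - x) \<longlongrightarrow> 0) (at_right 0)"
    by (rule Lim_null_comparison[OF _ l0]) (use e0 cP_close[OF pos _ t] in \<open>auto elim!: eventually_mono\<close>)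
  then have "((\<lambda>x. x + (cP P t x - x)) \<longlongrightarrow> 0 + 0) (at_right 0)"
    by (intro tendsto_add) (auto intro: tendsto_ident_at)
  then have A0: "(cP P t \<longlongrightarrow> 0) (at_right 0)" by simp
  show ?thesis unfolding setA_def using smooth_cP[OF pos] cP_range[OF pos _ t] A1 A0 by blast
qed

lemma cP_in_D:
  assumes P0: "poly P 0 = 0" and P1: "poly P 1 = 0"
    and pos: "\<forall>x\<in>XI. 0 < poly P x \<and> poly P x < min x (1 - x)"
    and S: "Sup ((\<lambda>x. ereal \<bar>poly (pderiv P) x\<bar>) ` XI) < 1" and t: "\<bar>t\<bar> < 1"
  shows "cP P t \<in> setD"
proof -
  define S where "S = Sup ((\<lambda>x. ereal \<bar>poly (pderiv P) x\<bar>) ` XI)"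
  have half: "(1/2::real) \<in> XI" by simp
  have le: "ereal \<bar>poly (pderiv P) x\<bar> \<le> S" if "x \<in> XI" for x
    unfolding S_def using that by (rule SUP_upper)
  have "S \<noteq> \<infinity>" "S \<noteq> -\<infinity>" using S le[OF half] unfolding S_def[symmetric] by auto
  then obtain r where r: "S = ereal r" by (cases S) auto
  have r1: "r < 1" using S r unfolding S_def[symmetric] by simp
  have rb: "\<bar>poly (pderiv P) x\<bar> \<le> r" if "x \<in> XI" for x using le[OF that] r by simp
  have dge: "deriv (cP P t) x \<ge> 1 - r" if "x \<in> XI" for x
    using deriv_cP_ge[OF pos that t] rb[OF that] by linarith
  have "ereal (1 - r) \<le> Inf ((\<lambda>x. ereal (deriv (cP P t) x)) ` XI)"
    by (rule INF_greatest) (use dge in simp)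
  moreover have "ereal (1 - r) \<le> Sup ((\<lambda>x. ereal (deriv (cP P t) x)) ` XI)"
    by (rule SUP_upper2[OF half]) (use dge[OF half] in simp)
  moreover have z: "ereal (1 - r) > 0" using r1 by simp
  ultimately show ?thesis unfolding setD_def using cP_in_A[OF P0 P1 pos t]
    less_le_trans[OF z] by blast
qed

lemma smooth_Gf:
  assumes pos: "\<forall>x\<in>XI. 0 < poly P x \<and> poly P x < min x (1 - x)"
  shows "smooth_on XI (\<lambda>x. Gf P \<bar>t\<bar> \<bar>t\<bar> x)"
  by (rule good_smooth[OF good_Gf[OF pos, of "\<lambda>_. \<bar>t\<bar>" "\<lambda>_. \<bar>t\<bar>"]]) auto

theorem theorem8p2:
  fixes P :: "real poly"
  assumes "poly P 0 = 0" and "poly P 1 = 0"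
    and "\<forall>x\<in>{0<..<1}. 0 < poly P x \<and> poly P x < min x (1 - x)"
    and "Sup ((\<lambda>x. ereal \<bar>poly (pderiv P) x\<bar>) ` {0<..<1}) < 1"
  shows "(\<forall>t\<in>{-1<..<1}. cP P t \<in> setD) \<and> F_C1_on {-1<..<1} (cP P)
         \<and> F_has_derivative (cP P) (\<lambda>x. 1) 0"
proof (intro conjI)
  note pos = assms(3)
  show "\<forall>t\<in>{-1<..<1}. cP P t \<in> setD"
    using cP_in_D[OF assms(1-4)] by auto
  define c' where "c' = (\<lambda>t x. Gf P \<bar>t\<bar> \<bar>t\<bar> x)"
  have hasd: "F_has_derivative (cP P) (c' t) t" for t :: real
    unfolding F_has_derivative_def
  proof (intro conjI)
    show "smooth_on XI (c' t)" unfolding c'_def by (rule smooth_Gf[OF pos])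
    define H where "H = (\<lambda>h x. Gf P ((\<lambda>_. \<bar>t\<bar>) h) ((\<lambda>h. \<bar>t + h\<bar>) h) x - Gf P ((\<lambda>_. \<bar>t\<bar>) h) ((\<lambda>_. \<bar>t\<bar>) h) x)"
    have H: "good H" unfolding H_def
      by (intro good_minus good_Gf[OF pos]) (auto intro!: continuous_intros)
    have z: "\<forall>x\<in>XI. H 0 x = 0" by (simp add: H_def)
    define d where "d = (if t = 0 then 1 else \<bar>t\<bar>)"
    have "d > 0" by (simp add: d_def)
    have ev: "eventually (\<lambda>h. \<forall>x\<in>XI. (cP P (t + h) x - cP P t x) / h - c' t x = H h x) (at 0)"
      unfolding eventually_at
    proof (intro exI[of _ d] conjI allI impI ballI)
      show "d > 0" by fact
      fix h x :: real assume "h \<in> UNIV" and h: "h \<noteq> 0 \<and> dist h 0 < d" and x: "x \<in> XI"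
      have sg: "(0 \<le> t \<and> 0 \<le> t + h) \<or> (t \<le> 0 \<and> t + h \<le> 0)"
        using h by (cases "t = 0") (auto simp: d_def dist_real_def)
      show "(cP P (t + h) x - cP P t x) / h - c' t x = H h x"
        using diffquot_eq[OF pos x _ sg] h by (simp add: H_def c'_def)
    qed
    show "F_tendsto (\<lambda>h x. (cP P (t + h) x - cP P t x) / h) (c' t) (at 0)"
      by (rule F_tendsto_goodI[OF H z at_within_le_nhds' ev])
  qed
  have cont: "F_tendsto c' (c' t) (at t within {-1<..<1})" for t :: real
  proof -
    define H where "H = (\<lambda>s x. Gf P ((\<lambda>s. \<bar>s\<bar>) s) ((\<lambda>s. \<bar>s\<bar>) s) x - Gf P ((\<lambda>_. \<bar>t\<bar>) s) ((\<lambda>_. \<bar>t\<bar>) s) x)"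
    have H: "good H" unfolding H_def
      by (intro good_minus good_Gf[OF pos]) (auto intro!: continuous_intros)
    have z: "\<forall>x\<in>XI. H t x = 0" by (simp add: H_def)
    have ev: "eventually (\<lambda>s. \<forall>x\<in>XI. c' s x - c' t x = H s x) (at t within {-1<..<1})"
      by (simp add: H_def c'_def)
    show ?thesis by (rule F_tendsto_goodI[OF H z at_within_le_nhds' ev])
  qed
  show "F_C1_on {-1<..<1} (cP P)"
    unfolding F_C1_on_def using smooth_cP[OF pos] hasd cont by blast
  show "F_has_derivative (cP P) (\<lambda>x. 1) 0"
    unfolding F_has_derivative_def
  proof (intro conjI)
    show "smooth_on XI (\<lambda>x. 1)"
      by (rule good_smooth[OF good_param[OF continuous_on_const[of UNIV 1]]]) auto
    define H where "H = (\<lambda>h x. Gf P ((\<lambda>_. 0) h) ((\<lambda>h. \<bar>h\<bar>) h) x - (\<lambda>_. 1) h)"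
    have H: "good H" unfolding H_def
      by (intro good_minus good_Gf[OF pos] good_param) (auto intro!: continuous_intros)
    have z: "\<forall>x\<in>XI. H 0 x = 0" using Gf00[OF pos] by (simp add: H_def)
    have ev: "eventually (\<lambda>h. \<forall>x\<in>XI. (cP P (0 + h) x - cP P 0 x) / h - 1 = H h x) (at 0)"
      unfolding eventually_at
    proof (intro exI[of _ 1] conjI allI impI ballI)
      show "(1::real) > 0" by simp
      fix h x :: real assume "h \<in> UNIV" and h: "h \<noteq> 0 \<and> dist h 0 < 1" and x: "x \<in> XI"
      have sg: "(0 \<le> (0::real) \<and> 0 \<le> 0 + h) \<or> (0 \<le> (0::real) \<and> 0 + h \<le> 0)" by auto
      show "(cP P (0 + h) x - cP P 0 x) / h - 1 = H h x"
        using diffquot_eq[OF pos x _ sg] h by (simp add: H_def)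
    qed
    show "F_tendsto (\<lambda>h x. (cP P (0 + h) x - cP P 0 x) / h) (\<lambda>x. 1) (at 0)"
      by (rule F_tendsto_goodI[OF H z at_within_le_nhds' ev])
  qed
qed

end
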